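(* Let $\sigma\in\mathbf{SL}(2,\mathbb{C})$, $z\in\mathbb{C}$, $\lambda>0$, $g=n[z]a[\lambda]$ and $P=z+\lambda j\in\mathbb{H}^3$. Then \[\Phi_{T(\sigma g)}=B\circ R(d\sigma,P)\circ B,\qquad B=\begin{pmatrix}1&0&0\\0&1&0\\0&0&-1\end{pmatrix}.\]
   Context: $\mathbb{H}^3=\{z+\lambda j:z\in\mathbb{C},\lambda>0\}\subset\mathbb{R}^3$ with $\mathbf{SL}(2,\mathbb{C})$ acting by $\begin{pmatrix}a&b\\c&d\end{pmatrix}(z+\lambda j)=\frac{(az+b)(\bar c\bar z+\bar d)+a\bar c\lambda^2}{|cz+d|^2+|c|^2\lambda^2}+\frac{\lambda}{|cz+d|^2+|c|^2\lambda^2}j$; $\mathrm{Im}(z+\lambda j):=\lambda$. $n[z]=\begin{pmatrix}1&z\\0&1\end{pmatrix}$, $a[\mu]=\begin{pmatrix}\sqrt\mu&0\\0&1/\sqrt\mu\end{pmatrix}$ ($\mu>0$). Every $g\in\mathbf{SL}(2,\mathbb{C})$ has a unique Iwasawa decomposition $g=n[w]a[\mu]K$ with $w\in\mathbb{C},\mu>0,K\in\mathbf{SU}(2)$; $T(g):=K$. $\Phi:\mathbf{SU}(2)\to\mathbf{SO}(3)$ is the double cover given, for $A=\begin{pmatrix}\alpha&\beta\\-\bar\beta&\bar\alpha\end{pmatrix}$, by $\Phi_A=\begin{pmatrix}\mathrm{Re}(\alpha^2-\beta^2)&-\mathrm{Im}(\alpha^2+\beta^2)&2\mathrm{Re}(\alpha\beta)\\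 \mathrm{Im}(\alpha^2-\beta^2)&\mathrm{Re}(\alpha^2+\beta^2)&2\mathrm{Im}(\alpha\beta)\\ -2\mathrm{Re}(\bar\alpha\beta)&2\mathrm{Im}(\alpha\bar\beta)&|\alpha|^2-|\beta|^2\end{pmatrix}$. For $\sigma\in\mathbf{SL}(2,\mathbb{C})$ and $P=z+\lambda j$, $R(d\sigma,P)$ is the linear map of $\mathbb{R}^3$ defined by $R(d\sigma,P)v:=\frac{\lambda}{\mathrm{Im}\,\sigma P}\,d\sigma_P(v)$, where $d\sigma_P$ is the differential at $P$ of the map $\sigma:\mathbb{H}^3\to\mathbb{H}^3\subset\mathbb{R}^3$ (tangent spaces identified with $\mathbb{R}^3$), written as a matrix in the basis $e_1,e_2,e_3$ (directions $x,y,\lambda$). *)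

theory Defs
  imports "HOL-Analysis.Analysis"
begin

definition mat2 :: "complex \<Rightarrow> complex \<Rightarrow> complex \<Rightarrow> complex \<Rightarrow> complex^2^2" where
  "mat2 a b c d = (\<chi> i j. if i = 1 then (if j = 1 then a else b) else (if j = 1 then c else d))"

definition SL2C :: "(complex^2^2) set" where
  "SL2C = {g. det g = 1}"

definition ctrans :: "complex^2^2 \<Rightarrow> complex^2^2" where
  "ctrans A = (\<chi> i j. cnj (A $ j $ i))"

definition SU2 :: "(complex^2^2) set" where
  "SU2 = {K. det K = 1 \<and> K ** ctrans K = mat 1}"

definition nmat :: "complex \<Rightarrow> complex^2^2" where
  "nmat z = mat2 1 z 0 1"

definition amat :: "real \<Rightarrow> complex^2^2" where
  "amat \<mu> = mat2 (complex_of_real (sqrt \<mu>)) 0 0 (complex_of_real (1 / sqrt \<mu>))"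

definition H3 :: "(real^3) set" where
  "H3 = {P. P $ 3 > 0}"

definition pt :: "complex \<Rightarrow> real \<Rightarrow> real^3" where
  "pt z l = vector [Re z, Im z, l]"

text \<open>The action of SL(2,C) on H^3 (the given formula, viewed as a map R^3 -> R^3).\<close>
definition act :: "complex^2^2 \<Rightarrow> real^3 \<Rightarrow> real^3" where
  "act g P = (let a = g$1$1; b = g$1$2; c = g$2$1; d = g$2$2;
                  z = Complex (P$1) (P$2); l = P$3;
                  D = (cmod (c*z + d))^2 + (cmod c)^2 * l^2;
                  w = ((a*z + b) * (cnj c * cnj z + cnj d) + a * cnj c * complex_of_real (l^2)) / complex_of_real D
              in pt w (l / D))"

text \<open>Iwasawa K-part: the unique K in SU(2) with g = n[w] a[mu] K.\<close>
definition Tpart :: "complex^2^2 \<Rightarrow> complex^2^2" where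
  "Tpart g = (THE K. K \<in> SU2 \<and> (\<exists>w \<mu>. \<mu> > 0 \<and> g = nmat w ** amat \<mu> ** K))"

definition Phi :: "complex^2^2 \<Rightarrow> real^3^3" where
  "Phi A = (let \<alpha> = A$1$1; \<beta> = A$1$2 in
     vector [vector [Re (\<alpha>^2 - \<beta>^2), - Im (\<alpha>^2 + \<beta>^2), 2 * Re (\<alpha>*\<beta>)],
             vector [Im (\<alpha>^2 - \<beta>^2), Re (\<alpha>^2 + \<beta>^2), 2 * Im (\<alpha>*\<beta>)],
             vector [- 2 * Re (cnj \<alpha> * \<beta>), 2 * Im (\<alpha> * cnj \<beta>), (cmod \<alpha>)^2 - (cmod \<beta>)^2]])"

definition Rmat :: "complex^2^2 \<Rightarrow> real^3 \<Rightarrow> real^3^3" where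
  "Rmat \<sigma> P = (P$3 / (act \<sigma> P)$3) *\<^sub>R matrix (frechet_derivative (act \<sigma>) (at P))"

definition Bmat :: "real^3^3" where
  "Bmat = vector [vector [1, 0, 0], vector [0, 1, 0], vector [0, 0, -1]]"

end

theory Submission
  imports Defs
begin


lemma mat2_nth[simp]: "mat2 a b c d $ 1 $ 1 = a" "mat2 a b c d $ 1 $ 2 = b"
  "mat2 a b c d $ 2 $ 1 = c" "mat2 a b c d $ 2 $ 2 = d"
  by (simp_all add: mat2_def)

lemma mmult_nth2: "((A::complex^2^2) ** B) $ i $ j = A$i$1 * B$1$j + A$i$2 * B$2$j"
  by (simp add: matrix_matrix_mult_def sum_2)

lemma mat2_eq: "(A::complex^2^2) = B \<longleftrightarrow> A$1$1 = B$1$1 \<and> A$1$2 = B$1$2 \<and> A$2$1 = B$2$1 \<and> A$2$2 = B$2$2"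
  by (auto simp: vec_eq_iff forall_2)

lemma SU2_D:
  assumes "K \<in> SU2"
  shows "K$1$1 = cnj (K$2$2)" "K$1$2 = - cnj (K$2$1)"
    "K$2$1 * cnj (K$2$1) + K$2$2 * cnj (K$2$2) = 1"
proof -
  have d: "K$1$1 * K$2$2 - K$1$2 * K$2$1 = 1" using assms by (simp add: SU2_def det_2)
  have m: "K ** ctrans K = mat 1" using assms by (simp add: SU2_def)
  have e22: "K$2$1 * cnj (K$2$1) + K$2$2 * cnj (K$2$2) = 1"
    using arg_cong[OF m, of "\<lambda>A. A$2$2"] by (simp add: mmult_nth2 ctrans_def mat_def)
  have e12: "K$1$1 * cnj (K$2$1) + K$1$2 * cnj (K$2$2) = 0"
    using arg_cong[OF m, of "\<lambda>A. A$1$2"] by (simp add: mmult_nth2 ctrans_def mat_def)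
  show "K$2$1 * cnj (K$2$1) + K$2$2 * cnj (K$2$2) = 1" by (fact e22)
  have "K$1$1 = K$1$1 * (K$2$1 * cnj (K$2$1) + K$2$2 * cnj (K$2$2))" using e22 by simp
  also have "\<dots> = cnj (K$2$2) * (K$1$1 * K$2$2 - K$1$2 * K$2$1) + K$2$1 * (K$1$1 * cnj (K$2$1) + K$1$2 * cnj (K$2$2))"
    by (simp add: algebra_simps)
  finally show "K$1$1 = cnj (K$2$2)" using d e12 by simp
  have "K$1$2 = K$1$2 * (K$2$1 * cnj (K$2$1) + K$2$2 * cnj (K$2$2))" using e22 by simp
  also have "\<dots> = - cnj (K$2$1) * (K$1$1 * K$2$2 - K$1$2 * K$2$1) + K$2$2 * (K$1$1 * cnj (K$2$1) + K$1$2 * cnj (K$2$2))"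
    by (simp add: algebra_simps)
  finally show "K$1$2 = - cnj (K$2$1)" using d e12 by simp
qed



lemma Dr_pos:
  fixes a b c d z :: complex and l :: real
  assumes "a*d - b*c = 1" "l > 0"
  shows "(cmod (c*z+d))^2 + (cmod c)^2 * l^2 > 0"
proof (cases "c = 0")
  case True
  then have "d \<noteq> 0" using assms(1) by auto
  then show ?thesis using True by simp
next
  case False
  then have "(cmod c)^2 * l^2 > 0" using assms(2) by simp
  then show ?thesis by (smt (verit) zero_le_power2)
qed

lemma Dr_complex:
  "complex_of_real ((cmod (c*z+d))^2 + (cmod c)^2 * l^2) = (c*z+d) * cnj (c*z+d) + c * cnj c * of_real l * of_real l"
proof -
  have 1: "complex_of_real ((cmod (c*z+d))^2) = (c*z+d) * cnj (c*z+d)" by (rule complex_norm_square)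
  have 2: "complex_of_real ((cmod c)^2) = c * cnj c" by (rule complex_norm_square)
  have 3: "complex_of_real (l^2) = of_real l * of_real l" by (simp add: power2_eq_square)
  show ?thesis by (simp only: of_real_add of_real_mult 1 2 3 mult.assoc)
qed

definition K0 :: "complex \<Rightarrow> complex \<Rightarrow> complex \<Rightarrow> real \<Rightarrow> complex^2^2" where
  "K0 c d z l = (let u = c*z+d; r = sqrt ((cmod u)^2 + (cmod c)^2 * l^2);
       \<alpha> = cnj u / of_real r; \<beta> = - cnj c * of_real l / of_real r in mat2 \<alpha> \<beta> (- cnj \<beta>) (cnj \<alpha>))"

lemma Tpart_unique:
  fixes \<sigma> K :: "complex^2^2" and z w :: complex and l \<mu> :: real
  assumes det: "\<sigma>$1$1*\<sigma>$2$2 - \<sigma>$1$2*\<sigma>$2$1 = 1" and l: "l > 0" and mu: "\<mu> > 0"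
    and K: "K \<in> SU2" and eq: "\<sigma> ** (nmat z ** amat l) = nmat w ** amat \<mu> ** K"
  shows "K = K0 (\<sigma>$2$1) (\<sigma>$2$2) z l"
proof -
  define c where "c = \<sigma>$2$1"
  define d where "d = \<sigma>$2$2"
  define u where "u = c*z+d"
  define Dr where "Dr = (cmod u)^2 + (cmod c)^2 * l^2"
  define r where "r = sqrt Dr"
  define sq where "sq = sqrt l"
  define t where "t = 1 / sqrt \<mu>"
  have Dr: "Dr > 0" unfolding Dr_def u_def using Dr_pos[OF det l] c_def d_def by simp
  have r: "r > 0" "r * r = Dr" using Dr by (auto simp: r_def)
  have sq: "sq > 0" "sq * sq = l" using l by (auto simp: sq_def)
  have t: "t > 0" using mu by (simp add: t_def)
  have DrC: "complex_of_real Dr = u * cnj u + c * cnj c * of_real l * of_real l"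
    unfolding Dr_def u_def by (rule Dr_complex)
  have e21: "c * of_real sq = of_real t * K$2$1"
    using arg_cong[OF eq, of "\<lambda>A. A$2$1"]
    by (simp add: mmult_nth2 nmat_def amat_def c_def sq_def t_def)
  have e22: "u / of_real sq = of_real t * K$2$2"
    using arg_cong[OF eq, of "\<lambda>A. A$2$2"]
    by (simp add: mmult_nth2 nmat_def amat_def c_def d_def u_def sq_def t_def add_divide_distrib algebra_simps)
  have k21: "K$2$1 = c * of_real sq / of_real t" using e21 t by (simp add: field_simps)
  have k22: "K$2$2 = u / (of_real sq * of_real t)" using e22 t sq by (simp add: field_simps)
  have unit: "K$2$1 * cnj (K$2$1) + K$2$2 * cnj (K$2$2) = 1" by (rule SU2_D[OF K])
  have "complex_of_real (t*t*l) = complex_of_real Dr"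
  proof -
    have "complex_of_real (t*t*l) = of_real (t*t*l) * (K$2$1 * cnj (K$2$1) + K$2$2 * cnj (K$2$2))"
      using unit by simp
    also have "\<dots> = u * cnj u + c * cnj c * of_real l * of_real l"
      unfolding k21 k22 using sq t
      by (simp add: field_simps of_real_mult[symmetric] del: of_real_mult)
    finally show ?thesis using DrC by simp
  qed
  then have "t*t*l = Dr" by (simp only: of_real_eq_iff)
  then have "(t * sq) * (t * sq) = r * r"
  proof -
    assume h: "t*t*l = Dr"
    have "(t * sq) * (t * sq) = t*t*(sq* sq)" by (simp add: algebra_simps)
    then show ?thesis using h sq(2) r(2) by simp
  qed
  then have ts: "t* sq = r" using t sq r by (smt (verit) mult_pos_pos mult_strict_mono)
  have K21: "K$2$1 = c * of_real l / of_real r"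
    unfolding k21 ts[symmetric] using sq t by (simp add: field_simps flip: sq(2))
  have K22: "K$2$2 = cnj (cnj u / of_real r)"
    unfolding k22 ts[symmetric] by (simp add: mult.commute)
  show ?thesis
    unfolding mat2_eq K0_def Let_def
    using SU2_D[OF K] K21 K22 by (simp add: c_def d_def u_def Dr_def r_def)
qed



lemma Tpart_exists:
  fixes a b c d z :: complex and l :: real
  assumes det: "a*d - b*c = 1" and l: "l > 0"
  defines "u \<equiv> c*z+d"
  defines "Dr \<equiv> (cmod u)^2 + (cmod c)^2 * l^2"
  defines "w \<equiv> ((a*z+b) * cnj u + a * cnj c * of_real l * of_real l) / of_real Dr"
  shows "mat2 a b c d ** (nmat z ** amat l) = nmat w ** amat (l / Dr) ** K0 c d z l"
proof -
  define r where "r = sqrt Dr"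
  define sq where "sq = sqrt l"
  have Dr: "Dr > 0" unfolding Dr_def u_def using Dr_pos[OF det l] by simp
  have r: "r > 0" "r * r = Dr" using Dr by (auto simp: r_def)
  have sq: "sq > 0" "sq * sq = l" using l by (auto simp: sq_def)
  have DrC: "complex_of_real Dr = u * cnj u + c * cnj c * of_real l * of_real l"
    unfolding Dr_def u_def by (rule Dr_complex)
  define p where "p = complex_of_real sq"
  define q where "q = complex_of_real r"
  have p: "p \<noteq> 0" "p * p = of_real l" using sq by (auto simp: p_def simp flip: of_real_mult)
  have q: "q \<noteq> 0" "q * q = u * cnj u + c * cnj c * of_real l * of_real l" using r DrC
    by (auto simp: q_def simp flip: of_real_mult)
  have sm: "sqrt (l / Dr) = sq / r" by (simp add: real_sqrt_divide sq_def r_def)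
  have wq: "w = ((a*z+b) * cnj u + a * cnj c * of_real l * of_real l) / (q*q)"
    unfolding w_def q(2) DrC ..
  have K0e: "K0 c d z l = mat2 (cnj u / q) (- cnj c * of_real l / q) (c * of_real l / q) (u / q)"
    by (simp add: K0_def Let_def u_def Dr_def r_def q_def)
  have Ne: "nmat z ** amat l = mat2 p (z/p) 0 (1/p)"
    unfolding mat2_eq by (simp add: mmult_nth2 nmat_def amat_def p_def sq_def)
  have Me: "nmat w ** amat (l/Dr) = mat2 (p/q) (w*q/p) 0 (q/p)"
    unfolding mat2_eq by (simp add: mmult_nth2 nmat_def amat_def p_def q_def sm)
  have L: "complex_of_real l = p * p" using p by simp
  show ?thesis
    unfolding K0e Ne Me
    unfolding mat2_eq wq L
    apply (simp add: mmult_nth2)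
    using p(1) q(1) apply (simp add: field_simps)
    using q(2)[unfolded L] det unfolding u_def by algebra
qed

lemma K0_SU2:
  fixes a b c d z :: complex and l :: real
  assumes det: "a*d - b*c = 1" and l: "l > 0"
  shows "K0 c d z l \<in> SU2"
proof -
  define u where "u = c*z+d"
  define Dr where "Dr = (cmod u)^2 + (cmod c)^2 * l^2"
  define q where "q = complex_of_real (sqrt Dr)"
  have Dr: "Dr > 0" unfolding Dr_def u_def using Dr_pos[OF det l] by simp
  have DrC: "complex_of_real Dr = u * cnj u + c * cnj c * of_real l * of_real l"
    unfolding Dr_def u_def by (rule Dr_complex)
  have q: "q \<noteq> 0" "q * q = u * cnj u + c * cnj c * of_real l * of_real l" "cnj q = q" using Dr DrC
    by (auto simp: q_def simp flip: of_real_mult)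
  have K0e: "K0 c d z l = mat2 (cnj u / q) (- cnj c * of_real l / q) (c * of_real l / q) (u / q)"
    by (simp add: K0_def Let_def u_def Dr_def q_def)
  have one: "cnj u / q * (u / q) + cnj c * of_real l / q * (c * of_real l / q) = 1"
  proof -
    have "cnj u / q * (u / q) + cnj c * of_real l / q * (c * of_real l / q) = (u * cnj u + c * cnj c * of_real l * of_real l) / (q*q)"
      using q(1) by (simp add: field_simps)
    also have "\<dots> = 1" unfolding q(2)[symmetric] using q(1) by simp
    finally show ?thesis .
  qed
  show ?thesis
    unfolding SU2_def K0e
    using one by (auto simp: det_2 mat2_eq mmult_nth2 ctrans_def mat_def q(3) field_simps)
qed

lemma Tpart_K0:
  fixes \<sigma> :: "complex^2^2" and z :: complex and l :: real
  assumes det: "\<sigma>$1$1*\<sigma>$2$2 - \<sigma>$1$2*\<sigma>$2$1 = 1" and l: "l > 0"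
  shows "Tpart (\<sigma> ** (nmat z ** amat l)) = K0 (\<sigma>$2$1) (\<sigma>$2$2) z l"
  unfolding Tpart_def
proof (rule the_equality)
  have s: "\<sigma> = mat2 (\<sigma>$1$1) (\<sigma>$1$2) (\<sigma>$2$1) (\<sigma>$2$2)" by (simp add: mat2_eq)
  define u where "u = \<sigma>$2$1*z+\<sigma>$2$2"
  define Dr where "Dr = (cmod u)^2 + (cmod (\<sigma>$2$1))^2 * l^2"
  have Dr: "Dr > 0" unfolding Dr_def u_def using Dr_pos[OF det l] by simp
  show "K0 (\<sigma>$2$1) (\<sigma>$2$2) z l \<in> SU2 \<and> (\<exists>w \<mu>. \<mu> > 0 \<and> \<sigma> ** (nmat z ** amat l) = nmat w ** amat \<mu> ** K0 (\<sigma>$2$1) (\<sigma>$2$2) z l)"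
  proof -
    note E = Tpart_exists[OF det l, of z, folded u_def, folded Dr_def]
    have E2: "\<sigma> ** (nmat z ** amat l) = nmat (((\<sigma>$1$1 * z + \<sigma>$1$2) * cnj u + \<sigma>$1$1 * cnj (\<sigma>$2$1) * of_real l * of_real l) / of_real Dr) ** amat (l / Dr) ** K0 (\<sigma>$2$1) (\<sigma>$2$2) z l"
      using E by (simp only: s[symmetric])
    show ?thesis using K0_SU2[OF det l] E2 Dr l by (meson divide_pos_pos)
  qed
next
  fix K assume "K \<in> SU2 \<and> (\<exists>w \<mu>. \<mu> > 0 \<and> \<sigma> ** (nmat z ** amat l) = nmat w ** amat \<mu> ** K)"
  then show "K = K0 (\<sigma>$2$1) (\<sigma>$2$2) z l" using Tpart_unique[OF det l] by blast
qed



lemma vector3_eq: "(vector [x,y,w] :: real^3) = x *\<^sub>R axis 1 1 + y *\<^sub>R axis 2 1 + w *\<^sub>R axis 3 1"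
  by (simp add: vec_eq_iff forall_3 axis_def)

lemma has_derivative_vector3:
  assumes "(f has_derivative f') F" "(g has_derivative g') F" "(k has_derivative k') F"
  shows "((\<lambda>x. vector [f x, g x, k x] :: real^3) has_derivative (\<lambda>h. vector [f' h, g' h, k' h])) F"
  unfolding vector3_eq
  by (intro has_derivative_add has_derivative_scaleR_left assms)

lemma has_derivative_nth: "((\<lambda>x. x $ i) has_derivative (\<lambda>h. h $ i)) F"
  by (rule bounded_linear_imp_has_derivative[OF bounded_linear_vec_nth])

lemma act_eq:
  fixes \<sigma> :: "complex^2^2"
  defines "a \<equiv> \<sigma>$1$1" and "b \<equiv> \<sigma>$1$2" and "c \<equiv> \<sigma>$2$1" and "d \<equiv> \<sigma>$2$2"
  shows "act \<sigma> = (\<lambda>Q. let Z = of_real (Q$1) + \<i> * of_real (Q$2); L = of_real (Q$3);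
      DQ = (c*Z+d) * cnj (c*Z+d) + c * cnj c * L * L in
      pt (((a*Z+b) * cnj (c*Z+d) + a * cnj c * L * L) / DQ) (Re (L / DQ)))"
proof
  fix Q :: "real^3"
  have Z: "Complex (Q$1) (Q$2) = of_real (Q$1) + \<i> * of_real (Q$2)" by (simp add: Complex_eq)
  define Dq where "Dq = (cmod (c * Complex (Q$1) (Q$2) + d))^2 + (cmod c)^2 * (Q$3)^2"
  have DC: "complex_of_real Dq = (c * Complex (Q$1) (Q$2) + d) * cnj (c * Complex (Q$1) (Q$2) + d) + c * cnj c * of_real (Q$3) * of_real (Q$3)"
    unfolding Dq_def by (rule Dr_complex)
  have R: "Q$3 / Dq = Re (of_real (Q$3) / complex_of_real Dq)" by simp
  show "act \<sigma> Q = (let Z = of_real (Q$1) + \<i> * of_real (Q$2); L = of_real (Q$3);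
      DQ = (c*Z+d) * cnj (c*Z+d) + c * cnj c * L * L in
      pt (((a*Z+b) * cnj (c*Z+d) + a * cnj c * L * L) / DQ) (Re (L / DQ)))"
    unfolding act_def Let_def R DC[symmetric] Z[symmetric]
    by (simp add: a_def b_def c_def d_def Dq_def of_real_mult[symmetric] power2_eq_square del: of_real_mult, simp add: mult.assoc)
qed



definition ZZ :: "real^3 \<Rightarrow> complex" where "ZZ Q = of_real (Q$1) + \<i> * of_real (Q$2)"

lemma ZZ_deriv [derivative_intros]: "(ZZ has_derivative ZZ) F"
  unfolding ZZ_def[abs_def]
  by (intro derivative_intros has_derivative_nth)

lemma ZZ_pt [simp]: "ZZ (pt z l) = z" by (simp add: ZZ_def pt_def complex_eq_iff)
lemma pt3 [simp]: "pt z l $ 3 = l" by (simp add: pt_def)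

lemma W_deriv:
  fixes a b c d z :: complex and l :: real
  assumes det: "a*d - b*c = 1" and l: "l > 0"
  defines "u \<equiv> c*z+d"
  defines "Dc \<equiv> u * cnj u + c * cnj c * of_real l * of_real l"
  shows "((\<lambda>Q. ((a*ZZ Q+b) * cnj (c*ZZ Q+d) + a * cnj c * of_real (Q$3) * of_real (Q$3)) /
              ((c*ZZ Q+d) * cnj (c*ZZ Q+d) + c * cnj c * of_real (Q$3) * of_real (Q$3)))
     has_derivative (\<lambda>h. ((cnj u)^2 * ZZ h - (cnj c)^2 * of_real l * of_real l * cnj (ZZ h)
          + 2 * cnj u * cnj c * of_real l * of_real (h$3)) / (Dc * Dc))) (at (pt z l))"
proof -
  have Dc0: "Dc \<noteq> 0"
  proof -
    have "complex_of_real ((cmod (c*z+d))^2 + (cmod c)^2 * l^2) \<noteq> 0"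
      using Dr_pos[OF det l, of z] by (metis of_real_eq_0_iff order_less_irrefl)
    then show ?thesis unfolding Dc_def u_def Dr_complex .
  qed
  show ?thesis
    apply (rule has_derivative_eq_rhs)
     apply (rule derivative_intros has_derivative_nth)+
    using Dc0 unfolding Dc_def u_def
     apply simp
    apply (rule ext)
    apply (simp only: ZZ_pt pt3)
    apply (fold u_def)
    apply (fold Dc_def)
    using Dc0 apply (simp add: field_simps)
    unfolding Dc_def u_def
    using det by algebra
qed



lemma T_deriv:
  fixes a b c d z :: complex and l :: real
  assumes det: "a*d - b*c = 1" and l: "l > 0"
  defines "u \<equiv> c*z+d"
  defines "Dc \<equiv> u * cnj u + c * cnj c * of_real l * of_real l"
  shows "((\<lambda>Q. of_real (Q$3) /
              ((c*ZZ Q+d) * cnj (c*ZZ Q+d) + c * cnj c * of_real (Q$3) * of_real (Q$3)))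
     has_derivative (\<lambda>h. (of_real (h$3) * (u * cnj u - c * cnj c * of_real l * of_real l)
          - of_real l * (c * ZZ h * cnj u + u * cnj c * cnj (ZZ h))) / (Dc * Dc))) (at (pt z l))"
proof -
  have Dc0: "Dc \<noteq> 0"
  proof -
    have "complex_of_real ((cmod (c*z+d))^2 + (cmod c)^2 * l^2) \<noteq> 0"
      using Dr_pos[OF det l, of z] by (metis of_real_eq_0_iff order_less_irrefl)
    then show ?thesis unfolding Dc_def u_def Dr_complex .
  qed
  show ?thesis
    apply (rule has_derivative_eq_rhs)
     apply (rule derivative_intros has_derivative_nth)+
    using Dc0 unfolding Dc_def u_def
     apply simp
    apply (rule ext)
    apply (simp only: ZZ_pt pt3)
    apply (fold u_def)
    apply (fold Dc_def)
    using Dc0 apply (simp add: field_simps)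
    unfolding Dc_def u_def
    by algebra
qed

lemma act_deriv:
  fixes \<sigma> :: "complex^2^2" and z :: complex and l :: real
  assumes det: "\<sigma>$1$1*\<sigma>$2$2 - \<sigma>$1$2*\<sigma>$2$1 = 1" and l: "l > 0"
  defines "c \<equiv> \<sigma>$2$1" and "d \<equiv> \<sigma>$2$2"
  defines "u \<equiv> c*z+d"
  defines "Dc \<equiv> u * cnj u + c * cnj c * of_real l * of_real l"
  defines "dW \<equiv> (\<lambda>h. ((cnj u)^2 * ZZ h - (cnj c)^2 * of_real l * of_real l * cnj (ZZ h)
          + 2 * cnj u * cnj c * of_real l * of_real (h$3)) / (Dc * Dc))"
  defines "dT \<equiv> (\<lambda>h. (of_real (h$3) * (u * cnj u - c * cnj c * of_real l * of_real l)
          - of_real l * (c * ZZ h * cnj u + u * cnj c * cnj (ZZ h))) / (Dc * Dc))"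
  shows "(act \<sigma> has_derivative (\<lambda>h. vector [Re (dW h), Im (dW h), Re (dT h)])) (at (pt z l))"
proof -
  have e: "act \<sigma> = (\<lambda>Q. vector [Re (((\<sigma>$1$1*ZZ Q+\<sigma>$1$2) * cnj (c*ZZ Q+d) + \<sigma>$1$1 * cnj c * of_real (Q$3) * of_real (Q$3)) /
              ((c*ZZ Q+d) * cnj (c*ZZ Q+d) + c * cnj c * of_real (Q$3) * of_real (Q$3))),
              Im (((\<sigma>$1$1*ZZ Q+\<sigma>$1$2) * cnj (c*ZZ Q+d) + \<sigma>$1$1 * cnj c * of_real (Q$3) * of_real (Q$3)) /
              ((c*ZZ Q+d) * cnj (c*ZZ Q+d) + c * cnj c * of_real (Q$3) * of_real (Q$3))),
              Re (of_real (Q$3) /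
              ((c*ZZ Q+d) * cnj (c*ZZ Q+d) + c * cnj c * of_real (Q$3) * of_real (Q$3)))])"
    unfolding act_eq Let_def ZZ_def[symmetric] pt_def c_def d_def ..
  note W = W_deriv[OF det l, of z]
  note T = T_deriv[OF det l, of z]
  show ?thesis unfolding e
    apply (rule has_derivative_vector3)
    using has_derivative_Re[OF W] has_derivative_Im[OF W] has_derivative_Re[OF T]
    by (simp_all add: dW_def dT_def Dc_def u_def c_def d_def)
qed



lemma ZZ_axis [simp]: "ZZ (axis 1 1) = 1" "ZZ (axis 2 1) = \<i>" "ZZ (axis 3 1) = 0"
  by (simp_all add: ZZ_def axis_def)

lemma axis3 [simp]: "(axis 1 1 :: real^3) $ 3 = 0" "(axis 2 1 :: real^3) $ 3 = 0" "(axis 3 1 :: real^3) $ 3 = 1"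
  by (simp_all add: axis_def)

lemma cm: "cmod x * cmod x = Re x * Re x + Im x * Im x"
  by (metis cmod_power2 power2_eq_square)

theorem mainTheorem3:
  fixes \<sigma> :: "complex^2^2" and z :: complex and l :: real
  assumes "\<sigma> \<in> SL2C" and "l > 0"
  shows "act \<sigma> differentiable (at (pt z l)) \<and>
         Phi (Tpart (\<sigma> ** (nmat z ** amat l))) = Bmat ** Rmat \<sigma> (pt z l) ** Bmat"
proof -
  have det: "\<sigma>$1$1*\<sigma>$2$2 - \<sigma>$1$2*\<sigma>$2$1 = 1" using assms(1) by (simp add: SL2C_def det_2)
  note l = assms(2)
  define c where "c = \<sigma>$2$1"
  define d where "d = \<sigma>$2$2"
  define u where "u = c*z+d"
  define Dc where "Dc = u * cnj u + c * cnj c * of_real l * of_real l"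
  define dW where "dW = (\<lambda>h. ((cnj u)^2 * ZZ h - (cnj c)^2 * of_real l * of_real l * cnj (ZZ h)
          + 2 * cnj u * cnj c * of_real l * of_real (h$3)) / (Dc * Dc))"
  define dT where "dT = (\<lambda>h. (of_real (h$3) * (u * cnj u - c * cnj c * of_real l * of_real l)
          - of_real l * (c * ZZ h * cnj u + u * cnj c * cnj (ZZ h))) / (Dc * Dc))"
  define F where "F = (\<lambda>h. vector [Re (dW h), Im (dW h), Re (dT h)] :: real^3)"
  have D: "(act \<sigma> has_derivative F) (at (pt z l))"
    using act_deriv[OF det l, of z] unfolding F_def dW_def dT_def Dc_def u_def c_def d_def .
  define Dr where "Dr = (cmod u)^2 + (cmod c)^2 * l^2"
  have Dr: "Dr > 0" unfolding Dr_def u_def c_def d_def using Dr_pos[OF det l] by simp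
  have DcDr: "Dc = of_real Dr" unfolding Dc_def Dr_def u_def by (rule Dr_complex[symmetric])
  define r where "r = sqrt Dr"
  have r: "r > 0" "r * r = Dr" using Dr by (auto simp: r_def)
  have K0e: "K0 c d z l = mat2 (cnj u / of_real r) (- cnj c * of_real l / of_real r) (c * of_real l / of_real r) (u / of_real r)"
    by (simp add: K0_def Let_def u_def Dr_def r_def)
  have act3: "act \<sigma> (pt z l) $ 3 = l / Dr"
    by (simp add: act_def Let_def pt_def Dr_def u_def c_def d_def)
  have R: "Rmat \<sigma> (pt z l) = Dr *\<^sub>R matrix F"
    unfolding Rmat_def act3 frechet_derivative_at[OF D, symmetric] using Dr l by simp
  have T: "Tpart (\<sigma> ** (nmat z ** amat l)) = K0 c d z l"
    unfolding c_def d_def by (rule Tpart_K0[OF det l])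
  have "Phi (K0 c d z l) = Bmat ** (Dr *\<^sub>R matrix F) ** Bmat"
    unfolding K0e
    apply (simp add: vec_eq_iff forall_3 Phi_def Let_def Bmat_def matrix_matrix_mult_def sum_3 matrix_def F_def dW_def dT_def DcDr
       power_divide norm_divide)
    apply (simp add: r_def Dr power2_eq_square abs_of_pos[OF Dr] norm_mult cm)
    using Dr l by (simp add: field_simps cm abs_of_pos)
  then show ?thesis using D T R by (auto intro: differentiableI)
qed


end
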